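(* Fix $m\ge1$ and $\omega\in\mathbb Z\setminus\{0\}$. There exist constants $c_\omega>0$ and $C_{m,\omega}>0$ such that for every smooth closed immersed planar curve $\gamma$ of length $1$ with turning number $\omega$, $$\int_\gamma F_0^2\,ds\ \ge\ c_\omega\,\mathcal P-C_{m,\omega}E_m[\gamma]^2,$$ where $\kappa=2\pi\omega$, $F_0:=(-1)^{m+1}(k_{s^{2m+2}}+\kappa^2k_{s^{2m}})$ and $\mathcal P:=\int_\gamma k_{s^{2m+2}}^2\,ds$.
   Context: $s$ arclength, $k$ signed curvature, $k_{s^j}$ its $j$-th arclength derivative, $E_m[\gamma]=\frac12\int_\gamma k_{s^m}^2ds$, turning number $\frac1{2\pi}\int_\gamma k\,ds$. *)

theory Defs
  imports "HOL-Analysis.Analysis"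
begin

text \<open>Planar curves are maps real \<Rightarrow> complex (identifying R^2 with C).
  vd f is the derivative of a real-parametrised curve.\<close>

definition vd :: "(real \<Rightarrow> complex) \<Rightarrow> real \<Rightarrow> complex" where
  "vd f = (\<lambda>t. vector_derivative f (at t))"

definition smooth_curve :: "(real \<Rightarrow> complex) \<Rightarrow> bool" where
  "smooth_curve g \<longleftrightarrow> (\<forall>n t. ((vd ^^ n) g) differentiable (at t))"

text \<open>A smooth closed immersed planar curve of length 1, parametrised by
  arclength s on [0,1] (extended 1-periodically): smooth, 1-periodic, unit speed.\<close>
definition closed_unit_length_curve :: "(real \<Rightarrow> complex) \<Rightarrow> bool" where
  "closed_unit_length_curve g \<longleftrightarrow>
     smooth_curve g \<and> (\<forall>t. g (t + 1) = g t) \<and> (\<forall>t. norm (vd g t) = 1)"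

text \<open>Signed curvature k = (x'y'' - y'x'')/|g'|^3 (= Im(conj g' * g'')/|g'|^3).\<close>
definition curvature :: "(real \<Rightarrow> complex) \<Rightarrow> real \<Rightarrow> real" where
  "curvature g t = Im (cnj (vd g t) * vd (vd g) t) / norm (vd g t) ^ 3"

definition kds :: "(real \<Rightarrow> complex) \<Rightarrow> nat \<Rightarrow> real \<Rightarrow> real" where
  "kds g j = (deriv ^^ j) (curvature g)"

definition turning_number :: "(real \<Rightarrow> complex) \<Rightarrow> real" where
  "turning_number g = integral {0..1} (curvature g) / (2 * pi)"

definition energy :: "nat \<Rightarrow> (real \<Rightarrow> complex) \<Rightarrow> real" where
  "energy m g = integral {0..1} (\<lambda>s. (kds g m s)^2) / 2"

end

theory Submission
  imports Defs "HOL-Probability.Characteristic_Functions"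
begin


definition okn :: "nat \<Rightarrow> (real \<Rightarrow> real) \<Rightarrow> bool" where
  "okn n f \<longleftrightarrow> (\<forall>j\<le>n. \<forall>t. ((deriv ^^ j) f) differentiable (at t))"

definition rsm :: "(real \<Rightarrow> real) \<Rightarrow> bool" where
  "rsm f \<longleftrightarrow> (\<forall>n t. ((deriv ^^ n) f) differentiable (at t))"

lemma rsm_okn: "rsm f \<longleftrightarrow> (\<forall>n. okn n f)"
  unfolding rsm_def okn_def by blast

lemma deriv_add_fun:
  fixes f h :: "real \<Rightarrow> real"
  assumes "\<And>t. f differentiable (at t)" "\<And>t. h differentiable (at t)"
  shows "deriv (\<lambda>x. f x + h x) = (\<lambda>x. deriv f x + deriv h x)"
proof
  fix x
  show "deriv (\<lambda>x. f x + h x) x = deriv f x + deriv h x"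
    by (intro DERIV_imp_deriv DERIV_add) (simp_all add: DERIV_deriv_iff_real_differentiable assms)
qed

lemma deriv_mult_fun:
  fixes f h :: "real \<Rightarrow> real"
  assumes "\<And>t. f differentiable (at t)" "\<And>t. h differentiable (at t)"
  shows "deriv (\<lambda>x. f x * h x) = (\<lambda>x. deriv f x * h x + f x * deriv h x)"
proof
  fix x
  show "deriv (\<lambda>x. f x * h x) x = deriv f x * h x + f x * deriv h x"
  proof -
    have "(f has_real_derivative deriv f x) (at x)" "(h has_real_derivative deriv h x) (at x)"
      by (simp_all add: DERIV_deriv_iff_real_differentiable assms)
    from DERIV_mult[OF this] show ?thesis
      by (intro DERIV_imp_deriv) (auto simp: mult.commute)
  qed
qed

lemma okn_add:
  assumes "okn n f" "okn n h"
  shows "j \<le> n \<Longrightarrow> (deriv ^^ j) (\<lambda>x. f x + h x) = (\<lambda>x. (deriv ^^ j) f x + (deriv ^^ j) h x)"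
proof (induction j)
  case 0 then show ?case by simp
next
  case (Suc j)
  then have "j \<le> n" by simp
  have "(deriv ^^ Suc j) (\<lambda>x. f x + h x) = deriv ((deriv ^^ j) (\<lambda>x. f x + h x))" by simp
  also have "\<dots> = deriv (\<lambda>x. (deriv ^^ j) f x + (deriv ^^ j) h x)" using Suc by simp
  also have "\<dots> = (\<lambda>x. (deriv ^^ Suc j) f x + (deriv ^^ Suc j) h x)"
    using assms \<open>j \<le> n\<close> unfolding okn_def by (subst deriv_add_fun) auto
  finally show ?case .
qed

lemma okn_add2: "okn n f \<Longrightarrow> okn n h \<Longrightarrow> okn n (\<lambda>x. f x + h x)"
  using okn_add[of n f h] unfolding okn_def
  by (auto simp del: funpow.simps)

lemma okn_diff:
  assumes "okn n f" "okn n h"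
  shows "j \<le> n \<Longrightarrow> (deriv ^^ j) (\<lambda>x. f x - h x) = (\<lambda>x. (deriv ^^ j) f x - (deriv ^^ j) h x)"
proof (induction j)
  case 0 then show ?case by simp
next
  case (Suc j)
  then have "j \<le> n" by simp
  have "(deriv ^^ Suc j) (\<lambda>x. f x - h x) = deriv ((deriv ^^ j) (\<lambda>x. f x - h x))" by simp
  also have "\<dots> = deriv (\<lambda>x. (deriv ^^ j) f x - (deriv ^^ j) h x)" using Suc by simp
  also have "\<dots> = (\<lambda>x. (deriv ^^ Suc j) f x - (deriv ^^ Suc j) h x)"
  proof
    fix x
    have "((deriv ^^ j) f has_real_derivative deriv ((deriv ^^ j) f) x) (at x)"
         "((deriv ^^ j) h has_real_derivative deriv ((deriv ^^ j) h) x) (at x)"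
      using assms \<open>j \<le> n\<close> unfolding okn_def
      by (simp_all add: DERIV_deriv_iff_real_differentiable)
    from DERIV_diff[OF this] show "deriv (\<lambda>x. (deriv ^^ j) f x - (deriv ^^ j) h x) x =
       (deriv ^^ Suc j) f x - (deriv ^^ Suc j) h x"
      by (intro DERIV_imp_deriv) auto
  qed
  finally show ?case .
qed

lemma okn_diff2: "okn n f \<Longrightarrow> okn n h \<Longrightarrow> okn n (\<lambda>x. f x - h x)"
  using okn_diff[of n f h] unfolding okn_def
  by (auto simp del: funpow.simps)

lemma rsm_deriv: "rsm f \<Longrightarrow> rsm (deriv f)"
  unfolding rsm_def by (metis funpow_Suc_right comp_apply)

lemma rsm_diffble: "rsm f \<Longrightarrow> f differentiable (at t)"
  unfolding rsm_def by (metis funpow_0)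

lemma okn_mult: "rsm f \<Longrightarrow> rsm h \<Longrightarrow> okn n (\<lambda>x. f x * h x)"
proof (induction n arbitrary: f h)
  case 0
  then show ?case unfolding okn_def
    using rsm_diffble[OF 0(1)] rsm_diffble[OF 0(2)] by auto
next
  case (Suc n)
  have e: "deriv (\<lambda>x. f x * h x) = (\<lambda>x. deriv f x * h x + f x * deriv h x)"
    using Suc.prems by (intro deriv_mult_fun rsm_diffble)
  have "okn n (\<lambda>x. deriv f x * h x)" "okn n (\<lambda>x. f x * deriv h x)"
    using Suc.IH Suc.prems rsm_deriv by blast+
  then have o: "okn n (deriv (\<lambda>x. f x * h x))" unfolding e by (rule okn_add2)
  show ?case unfolding okn_def
  proof (intro allI impI)
    fix j t assume "j \<le> Suc n"
    show "(deriv ^^ j) (\<lambda>x. f x * h x) differentiable at t"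
    proof (cases j)
      case 0 then show ?thesis using rsm_diffble[OF Suc.prems(1)] rsm_diffble[OF Suc.prems(2)]
        by auto
    next
      case (Suc i)
      then have "(deriv ^^ j) (\<lambda>x. f x * h x) = (deriv ^^ i) (deriv (\<lambda>x. f x * h x))"
        by (simp add: funpow_Suc_right del: funpow.simps)
      then show ?thesis using o \<open>j \<le> Suc n\<close> Suc unfolding okn_def by auto
    qed
  qed
qed

lemma rsm_mult: "rsm f \<Longrightarrow> rsm h \<Longrightarrow> rsm (\<lambda>x. f x * h x)"
  using okn_mult[of f h] unfolding rsm_okn[of "\<lambda>x. f x * h x"] by blast

lemma rsm_minus: "rsm f \<Longrightarrow> rsm h \<Longrightarrow> rsm (\<lambda>x. f x - h x)"
  using okn_diff2[of _ f h] unfolding rsm_okn by blast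

lemma smooth_vd: "smooth_curve F \<Longrightarrow> smooth_curve (vd F)"
  unfolding smooth_curve_def by (metis funpow_Suc_right comp_apply)

lemma smooth_diffble: "smooth_curve F \<Longrightarrow> F differentiable (at t)"
  unfolding smooth_curve_def by (metis funpow_0)

lemma smooth_hasvd: "smooth_curve F \<Longrightarrow> (F has_vector_derivative vd F t) (at t)"
  unfolding vd_def using smooth_diffble vector_derivative_works by blast

lemma deriv_Re_iter: "smooth_curve F \<Longrightarrow> (deriv ^^ n) (\<lambda>t. Re (F t)) = (\<lambda>t. Re ((vd ^^ n) F t))"
proof (induction n arbitrary: F)
  case 0 then show ?case by simp
next
  case (Suc n)
  have "deriv (\<lambda>t. Re (F t)) = (\<lambda>t. Re (vd F t))"
    using smooth_hasvd[OF Suc.prems] by (intro ext DERIV_imp_deriv has_field_derivative_Re)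
  then show ?case using Suc.IH[OF smooth_vd[OF Suc.prems]]
    by (simp add: funpow_Suc_right del: funpow.simps)
qed

lemma deriv_Im_iter: "smooth_curve F \<Longrightarrow> (deriv ^^ n) (\<lambda>t. Im (F t)) = (\<lambda>t. Im ((vd ^^ n) F t))"
proof (induction n arbitrary: F)
  case 0 then show ?case by simp
next
  case (Suc n)
  have "deriv (\<lambda>t. Im (F t)) = (\<lambda>t. Im (vd F t))"
    using smooth_hasvd[OF Suc.prems] by (intro ext DERIV_imp_deriv has_field_derivative_Im)
  then show ?case using Suc.IH[OF smooth_vd[OF Suc.prems]]
    by (simp add: funpow_Suc_right del: funpow.simps)
qed

lemma Re_diffble: "(G::real\<Rightarrow>complex) differentiable (at t) \<Longrightarrow> (\<lambda>t. Re (G t)) differentiable (at t)"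
  using vector_derivative_works has_field_derivative_Re real_differentiable_def by blast

lemma Im_diffble: "(G::real\<Rightarrow>complex) differentiable (at t) \<Longrightarrow> (\<lambda>t. Im (G t)) differentiable (at t)"
  using vector_derivative_works has_field_derivative_Im real_differentiable_def by blast

lemma rsm_Re: "smooth_curve F \<Longrightarrow> rsm (\<lambda>t. Re (F t))"
  unfolding rsm_def deriv_Re_iter
  by (auto intro!: Re_diffble simp: smooth_curve_def)

lemma rsm_Im: "smooth_curve F \<Longrightarrow> rsm (\<lambda>t. Im (F t))"
  unfolding rsm_def deriv_Im_iter
  by (auto intro!: Im_diffble simp: smooth_curve_def)

lemma periodic_deriv:
  fixes f :: "real \<Rightarrow> real"
  assumes "\<And>t. f differentiable (at t)" "\<And>t. f (t + 1) = f t"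
  shows "deriv f (t + 1) = deriv f t"
proof -
  have "(f has_real_derivative deriv f (t + 1)) (at (t + 1))"
    using assms(1) DERIV_deriv_iff_real_differentiable by blast
  then have "((\<lambda>x. f (x + 1)) has_real_derivative deriv f (t + 1)) (at t)"
    using DERIV_shift by blast
  moreover have "(\<lambda>x. f (x + 1)) = f" using assms(2) by auto
  ultimately show ?thesis by (metis DERIV_imp_deriv)
qed

lemma periodic_vd:
  fixes F :: "real \<Rightarrow> complex"
  assumes "\<And>t. F differentiable (at t)" "\<And>t. F (t + 1) = F t"
  shows "vd F (t + 1) = vd F t"
proof -
  have "(F has_vector_derivative vd F (t + 1)) (at (t + 1))"
    using assms(1) vector_derivative_works unfolding vd_def by blast
  moreover have "((\<lambda>x. x + 1) has_vector_derivative 1) (at t)"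
    by (auto intro!: derivative_eq_intros)
  ultimately have "((F \<circ> (\<lambda>x. x + 1)) has_vector_derivative (1 *\<^sub>R vd F (t + 1))) (at t)"
    using vector_diff_chain_at[of "\<lambda>x. x + 1" 1 t F] by simp
  moreover have "F \<circ> (\<lambda>x. x + 1) = F" using assms(2) by auto
  ultimately show ?thesis unfolding vd_def by (metis vector_derivative_at scaleR_one)
qed

lemma periodic_deriv_iter:
  assumes "rsm f" "\<And>t. f (t + 1) = f t"
  shows "(deriv ^^ j) f (t + 1) = (deriv ^^ j) f t"
proof (induction j arbitrary: t)
  case 0 then show ?case using assms by simp
next
  case (Suc j)
  have d: "\<And>t. ((deriv ^^ j) f) differentiable (at t)" using assms(1) unfolding rsm_def by blast
  show ?case using periodic_deriv[OF d Suc.IH] by simp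
qed

lemma sq_int_bound:
  fixes f :: "real \<Rightarrow> real"
  assumes "continuous_on {0..1} f"
  shows "(integral {0..1} (\<lambda>s. \<bar>f s\<bar>))\<^sup>2 \<le> integral {0..1} (\<lambda>s. (f s)\<^sup>2)"
proof -
  define c where "c = integral {0..1} (\<lambda>s. \<bar>f s\<bar>)"
  define I where "I = integral {0..1} (\<lambda>s. (f s)\<^sup>2)"
  have h1: "((\<lambda>s. (f s)\<^sup>2) has_integral I) {0..1}" unfolding I_def
    by (intro integrable_integral integrable_continuous_interval continuous_intros assms)
  have h2: "((\<lambda>s. \<bar>f s\<bar>) has_integral c) {0..1}" unfolding c_def
    by (intro integrable_integral integrable_continuous_interval continuous_intros assms)
  have h3: "((\<lambda>s. c\<^sup>2) has_integral c\<^sup>2) {0..1::real}"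
    using has_integral_const_real[of "c\<^sup>2" 0 1] by simp
  have "((\<lambda>s. (f s)\<^sup>2 - 2 * c * \<bar>f s\<bar> + c\<^sup>2) has_integral (I - 2 * c * c + c\<^sup>2)) {0..1}"
    by (intro has_integral_add has_integral_diff has_integral_mult_right h1 h2 h3)
  moreover have "\<And>s. 0 \<le> (f s)\<^sup>2 - 2 * c * \<bar>f s\<bar> + c\<^sup>2"
  proof -
    fix s
    have "(f s)\<^sup>2 - 2 * c * \<bar>f s\<bar> + c\<^sup>2 = (\<bar>f s\<bar> - c)\<^sup>2"
      by (simp add: power2_eq_square algebra_simps)
    then show "0 \<le> (f s)\<^sup>2 - 2 * c * \<bar>f s\<bar> + c\<^sup>2" by simp
  qed
  ultimately have "0 \<le> I - 2 * c * c + c\<^sup>2" by (rule has_integral_nonneg)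
  then show ?thesis unfolding c_def[symmetric] I_def[symmetric] by (simp add: power2_eq_square)
qed

lemma ftc_bound:
  fixes F :: "real \<Rightarrow> 'a::banach"
  assumes der: "\<And>s. s \<in> {0..1} \<Longrightarrow> (F has_vector_derivative F' s) (at s within {0..1})"
    and hc: "continuous_on {0..1} h"
    and le: "\<And>s. s \<in> {0..1} \<Longrightarrow> norm (F' s) \<le> h s"
    and ab: "a \<in> {0..1}" "b \<in> {0..1}"
  shows "norm (F b - F a) \<le> integral {0..1} h"
proof -
  have main: "norm (F y - F x) \<le> integral {0..1} h" if xy: "x \<in> {0..1}" "y \<in> {0..1}" "x \<le> y" for x y
  proof -
    have sub: "{x..y} \<subseteq> {0..1}" using xy by auto
    have "(F' has_integral (F y - F x)) {x..y}"
      using xy sub by (intro fundamental_theorem_of_calculus)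
        (auto intro: has_vector_derivative_within_subset[OF der])
    then have i1: "F' integrable_on {x..y}" and e1: "integral {x..y} F' = F y - F x"
      by (auto simp: has_integral_iff)
    have h0: "\<forall>s\<in>{0..1}. 0 \<le> h s" using le norm_ge_zero order_trans by blast
    have hi: "h integrable_on {x..y}"
      by (intro integrable_continuous_interval continuous_on_subset[OF hc sub])
    have "norm (F y - F x) \<le> integral {x..y} h"
      using Henstock_Kurzweil_Integration.integral_norm_bound_integral[OF i1 hi] le sub e1 by auto
    also have "\<dots> \<le> integral {0..1} h"
      using sub hi integrable_continuous_interval[OF hc] h0
      by (intro integral_subset_le) auto
    finally show ?thesis .
  qed
  show ?thesis
  proof (cases "a \<le> b")
    case True then show ?thesis using main ab by blast
  next
    case False then show ?thesis using main[of b a] ab by (simp add: norm_minus_commute)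
  qed
qed

lemma point_bound:
  fixes f :: "real \<Rightarrow> real"
  assumes der: "\<And>s. s \<in> {0..1} \<Longrightarrow> (f has_real_derivative f' s) (at s within {0..1})"
    and fc: "continuous_on {0..1} f'"
    and z: "s1 \<in> {0..1}" "f s1 = 0"
    and s: "s \<in> {0..1}"
  shows "(f s)\<^sup>2 \<le> integral {0..1} (\<lambda>t. (f' t)\<^sup>2)"
proof -
  have "norm (f s - f s1) \<le> integral {0..1} (\<lambda>t. \<bar>f' t\<bar>)"
    using der z s by (intro ftc_bound[where F'=f'])
      (auto simp: has_real_derivative_iff_has_vector_derivative intro!: continuous_intros fc)
  then have a: "\<bar>f s\<bar> \<le> integral {0..1} (\<lambda>t. \<bar>f' t\<bar>)" using z by simp
  then have "(f s)\<^sup>2 \<le> (integral {0..1} (\<lambda>t. \<bar>f' t\<bar>))\<^sup>2"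
    by (metis abs_ge_zero power2_abs power_mono)
  also have "\<dots> \<le> integral {0..1} (\<lambda>t. (f' t)\<^sup>2)" by (rule sq_int_bound[OF fc])
  finally show ?thesis .
qed

lemma exists_zero:
  fixes f :: "real \<Rightarrow> real"
  assumes fc: "continuous_on {0..1} f" and i: "integral {0..1} f = 0"
  shows "\<exists>s1\<in>{0..1}. f s1 = 0"
proof -
  obtain a where a: "a \<in> {0..1}" "\<And>y. y \<in> {0..1} \<Longrightarrow> f a \<le> f y"
    using continuous_attains_inf[OF compact_Icc _ fc] by auto
  obtain b where b: "b \<in> {0..1}" "\<And>y. y \<in> {0..1} \<Longrightarrow> f y \<le> f b"
    using continuous_attains_sup[OF compact_Icc _ fc] by auto
  have fi: "f integrable_on {0..1}" by (rule integrable_continuous_interval[OF fc])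
  have "f a \<le> 0"
  proof (rule ccontr)
    assume "\<not> f a \<le> 0"
    have "integral {0..1::real} (\<lambda>s. f a) \<le> integral {0..1} f"
      using a fi by (intro Henstock_Kurzweil_Integration.integral_le integrable_continuous_interval continuous_intros fc) auto
    then show False using \<open>\<not> f a \<le> 0\<close> i by simp
  qed
  moreover have "0 \<le> f b"
  proof (rule ccontr)
    assume "\<not> 0 \<le> f b"
    have "integral {0..1} f \<le> integral {0..1::real} (\<lambda>s. f b)"
      using b fi by (intro Henstock_Kurzweil_Integration.integral_le integrable_continuous_interval continuous_intros fc) auto
    then show False using \<open>\<not> 0 \<le> f b\<close> i by simp
  qed
  ultimately show ?thesis
  proof (cases "a \<le> b")
    case True
    then obtain x where "a \<le> x" "x \<le> b" "f x = 0"
      using IVT'[of f a 0 b] \<open>f a \<le> 0\<close> \<open>0 \<le> f b\<close> continuous_on_subset[OF fc] a b by auto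
    then show ?thesis using a b by auto
  next
    case False
    then obtain x where "b \<le> x" "x \<le> a" "f x = 0"
      using IVT2'[of f a 0 b] \<open>f a \<le> 0\<close> \<open>0 \<le> f b\<close> continuous_on_subset[OF fc] a b by auto
    then show ?thesis using a b by auto
  qed
qed

lemma poincare:
  fixes f :: "real \<Rightarrow> real"
  assumes der: "\<And>s. s \<in> {0..1} \<Longrightarrow> (f has_real_derivative f' s) (at s within {0..1})"
    and fc: "continuous_on {0..1} f'"
    and i: "integral {0..1} f = 0"
  shows "integral {0..1} (\<lambda>t. (f t)\<^sup>2) \<le> integral {0..1} (\<lambda>t. (f' t)\<^sup>2)"
proof -
  have c: "continuous_on {0..1} f" using der by (rule DERIV_continuous_on)
  obtain s1 where s1: "s1 \<in> {0..1}" "f s1 = 0" using exists_zero[OF c i] by blast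
  have "integral {0..1} (\<lambda>t. (f t)\<^sup>2) \<le> integral {0..1::real} (\<lambda>t. integral {0..1} (\<lambda>t. (f' t)\<^sup>2))"
    using point_bound[OF der fc s1(1) s1(2)]
    by (intro Henstock_Kurzweil_Integration.integral_le integrable_continuous_interval continuous_intros c) auto
  then show ?thesis by simp
qed

definition ee :: "real \<Rightarrow> real \<Rightarrow> complex" where
  "ee \<kappa> s = exp (\<i> * complex_of_real (\<kappa> * s))"

lemma ee_der: "(ee \<kappa> has_vector_derivative (\<i> * complex_of_real \<kappa> * ee \<kappa> s)) (at s within S)"
proof -
  have "((\<lambda>s. \<kappa> * s) has_vector_derivative \<kappa>) (at s within S)"
    using has_real_derivative_iff_has_vector_derivative by (auto intro!: derivative_eq_intros)
  from vector_diff_chain_within[OF this has_vector_derivative_iexp]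
  show ?thesis unfolding ee_def comp_def by (simp add: scaleR_conv_of_real ac_simps)
qed

lemma ee_cont: "continuous_on S (ee \<kappa>)"
  unfolding ee_def by (intro continuous_intros)

lemma norm_ee: "norm (ee \<kappa> s) = 1"
  unfolding ee_def by (simp add: norm_exp_i_times)

lemma ibp:
  fixes f :: "real \<Rightarrow> real"
  assumes ek: "ee \<kappa> 1 = 1"
    and der: "\<And>s. s \<in> {0..1} \<Longrightarrow> (f has_real_derivative f' s) (at s within {0..1})"
    and fc: "continuous_on {0..1} f'"
    and per: "f 0 = f 1"
  shows "integral {0..1} (\<lambda>s. of_real (f' s) * ee \<kappa> s)
       = - \<i> * of_real \<kappa> * integral {0..1} (\<lambda>s. of_real (f s) * ee \<kappa> s)"
proof -
  have c: "continuous_on {0..1} f" using der by (rule DERIV_continuous_on)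
  have "((\<lambda>s. of_real (f s) * ee \<kappa> s) has_vector_derivative
        (of_real (f s) * (\<i> * of_real \<kappa> * ee \<kappa> s) + of_real (f' s) * ee \<kappa> s)) (at s within {0..1})"
    if "s \<in> {0..1}" for s
    by (intro has_vector_derivative_mult has_vector_derivative_of_real ee_der der that)
  then have "((\<lambda>s. of_real (f s) * (\<i> * of_real \<kappa> * ee \<kappa> s) + of_real (f' s) * ee \<kappa> s)
       has_integral (of_real (f 1) * ee \<kappa> 1 - of_real (f 0) * ee \<kappa> 0)) {0..1}"
    by (intro fundamental_theorem_of_calculus) auto
  then have h: "((\<lambda>s. of_real (f s) * (\<i> * of_real \<kappa> * ee \<kappa> s) + of_real (f' s) * ee \<kappa> s)
       has_integral 0) {0..1}"
    using ek per by (simp add: ee_def)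
  have i1: "((\<lambda>s. of_real (f s) * ee \<kappa> s) has_integral integral {0..1} (\<lambda>s. of_real (f s) * ee \<kappa> s)) {0..1}"
    by (intro integrable_integral integrable_continuous_interval continuous_on_mult continuous_on_of_real c ee_cont)
  have i2: "((\<lambda>s. of_real (f' s) * ee \<kappa> s) has_integral integral {0..1} (\<lambda>s. of_real (f' s) * ee \<kappa> s)) {0..1}"
    by (intro integrable_integral integrable_continuous_interval continuous_on_mult continuous_on_of_real fc ee_cont)
  have "((\<lambda>s. (\<i> * of_real \<kappa>) * (of_real (f s) * ee \<kappa> s) + of_real (f' s) * ee \<kappa> s)
       has_integral ((\<i> * of_real \<kappa>) * integral {0..1} (\<lambda>s. of_real (f s) * ee \<kappa> s)
          + integral {0..1} (\<lambda>s. of_real (f' s) * ee \<kappa> s))) {0..1}"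
    by (intro has_integral_add has_integral_mult_right i1 i2)
  moreover have "(\<lambda>s. (\<i> * of_real \<kappa>) * (of_real (f s) * ee \<kappa> s) + of_real (f' s) * ee \<kappa> s)
     = (\<lambda>s. of_real (f s) * (\<i> * of_real \<kappa> * ee \<kappa> s) + of_real (f' s) * ee \<kappa> s)"
    by (rule ext) (simp add: algebra_simps)
  ultimately have A: "((\<lambda>s. of_real (f s) * (\<i> * of_real \<kappa> * ee \<kappa> s) + of_real (f' s) * ee \<kappa> s)
       has_integral ((\<i> * of_real \<kappa>) * integral {0..1} (\<lambda>s. of_real (f s) * ee \<kappa> s)
          + integral {0..1} (\<lambda>s. of_real (f' s) * ee \<kappa> s))) {0..1}"
    by simp
  have "(\<i> * of_real \<kappa>) * integral {0..1} (\<lambda>s. of_real (f s) * ee \<kappa> s)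
          + integral {0..1} (\<lambda>s. of_real (f' s) * ee \<kappa> s) = 0"
    by (rule has_integral_unique[OF A h])
  then show ?thesis by (metis add.commute add_eq_0_iff mult_minus_left)
qed

locale curve =
  fixes g :: "real \<Rightarrow> complex"
  assumes cl: "closed_unit_length_curve g"
begin

definition T where "T = vd g"
definition T' where "T' = vd (vd g)"

lemma sm: "smooth_curve g" using cl unfolding closed_unit_length_curve_def by blast
lemma per: "g (t + 1) = g t" using cl unfolding closed_unit_length_curve_def by blast
lemma unit: "norm (T t) = 1" using cl unfolding closed_unit_length_curve_def T_def by blast

lemma g_vd: "(g has_vector_derivative T t) (at t)"
  unfolding T_def using smooth_hasvd[OF sm] .
lemma T_vd: "(T has_vector_derivative T' t) (at t)"
  unfolding T_def T'_def using smooth_hasvd[OF smooth_vd[OF sm]] .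

lemma T_per: "T (t + 1) = T t"
  unfolding T_def using periodic_vd[OF smooth_diffble[OF sm] per] .
lemma T'_per: "T' (t + 1) = T' t"
proof -
  have "\<And>t. vd g (t + 1) = vd g t" using T_per unfolding T_def .
  from periodic_vd[of "vd g", OF smooth_diffble[OF smooth_vd[OF sm]] this] show ?thesis
    unfolding T'_def .
qed

lemma curv_eq: "curvature g = (\<lambda>t. Re (T t) * Im (T' t) - Im (T t) * Re (T' t))"
  by (rule ext) (simp add: curvature_def unit[unfolded T_def] T_def T'_def algebra_simps)

lemma curv_rsm: "rsm (curvature g)"
  unfolding curv_eq T_def T'_def
  by (intro rsm_minus rsm_mult rsm_Re rsm_Im smooth_vd sm)

lemma curv_per: "curvature g (t + 1) = curvature g t"
  unfolding curv_eq using T_per T'_per by simp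

lemma kds_per: "kds g j (t + 1) = kds g j t"
  unfolding kds_def using periodic_deriv_iter[OF curv_rsm curv_per] .

lemma kds_deriv: "(kds g j has_real_derivative kds g (Suc j) t) (at t)"
proof -
  have "((deriv ^^ j) (curvature g)) differentiable (at t)" using curv_rsm unfolding rsm_def by blast
  then show ?thesis unfolding kds_def by (simp add: DERIV_deriv_iff_real_differentiable)
qed

lemma kds_cont: "continuous_on S (kds g j)"
  using kds_deriv by (meson DERIV_isCont continuous_at_imp_continuous_on)

lemma kds0: "kds g 0 = curvature g" unfolding kds_def by simp

end




lemma a1: "(\<bar>k::real\<bar> ^ (2*m+1) * e)\<^sup>2 = k ^ (4*m+2) * e\<^sup>2"
proof -
  have "(\<bar>k\<bar> ^ (2*m+1) * e)\<^sup>2 = (\<bar>k\<bar> ^ (2*m+1))\<^sup>2 * e\<^sup>2" by (simp add: power_mult_distrib)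
  also have "(\<bar>k\<bar> ^ (2*m+1))\<^sup>2 = \<bar>k\<bar> ^ (4*m+2)"
  proof -
    have "4*m+2 = (2*m+1)*2" by simp
    then show ?thesis by (simp only: power_mult)
  qed
  also have "\<bar>k\<bar> ^ (4*m+2) = k ^ (4*m+2)"
  proof -
    have "(4*m+2) = 2 * (2*m+1)" by simp
    then show ?thesis by (metis power_even_abs even_mult_iff even_numeral)
  qed
  finally show ?thesis .
qed
lemma a2: "16 * (k::real)^4 * (k^(4*m+2) * e\<^sup>2) = 16 * k^(4*m+6) * e\<^sup>2"
proof -
  have "4*m+6 = 4 + (4*m+2)" by simp
  then have "k^4 * k^(4*m+2) = k^(4*m+6)" by (simp only: power_add)
  then show ?thesis by (metis mult.assoc)
qed
lemma a3: "(n::real) \<le> \<bar>k\<bar> * e \<Longrightarrow> \<bar>k\<bar> ^ j * n \<le> \<bar>k\<bar> ^ (j+1) * e"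
  using mult_left_mono[of n "\<bar>k\<bar> * e" "\<bar>k\<bar>^j"] by (metis abs_ge_zero mult.assoc power_add power_one_right zero_le_power)

lemma linear_part:
  fixes u u1 u2 :: "real \<Rightarrow> real" and \<kappa> :: real
  assumes d0: "\<And>s. s \<in> {0..1} \<Longrightarrow> (u has_real_derivative u1 s) (at s within {0..1})"
    and d1: "\<And>s. s \<in> {0..1} \<Longrightarrow> (u1 has_real_derivative u2 s) (at s within {0..1})"
    and c2: "continuous_on {0..1} u2"
    and p0: "u 0 = u 1" and p1: "u1 0 = u1 1"
    and ek: "ee \<kappa> 1 = 1" and kn: "\<kappa> \<noteq> 0"
  shows "integral {0..1} (\<lambda>s. (u2 s)\<^sup>2) \<le> (2 + 4 * \<kappa>\<^sup>2) * integral {0..1} (\<lambda>s. (u2 s + \<kappa>\<^sup>2 * u s)\<^sup>2)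
     + 16 * \<kappa>^4 * (norm (integral {0..1} (\<lambda>s. of_real (u s) * ee \<kappa> s)))\<^sup>2"
proof -
  define f where "f s = u2 s + \<kappa>\<^sup>2 * u s" for s
  define b where "b = integral {0..1} (\<lambda>s. of_real (u s) * ee \<kappa> s)"
  define Q where "Q = integral {0..1} (\<lambda>s. (f s)\<^sup>2)"
  define A where "A = integral {0..1} (\<lambda>s. \<bar>f s\<bar>)"
  define z where "z s = (of_real (u1 s) - \<i> * of_real \<kappa> * of_real (u s)) * ee \<kappa> s" for s
  have cu: "continuous_on {0..1} u" using d0 by (rule DERIV_continuous_on)
  have cu1: "continuous_on {0..1} u1" using d1 by (rule DERIV_continuous_on)
  have cf: "continuous_on {0..1} f" unfolding f_def by (intro continuous_intros c2 cu)
  have zd: "(z has_vector_derivative (of_real (f s) * ee \<kappa> s)) (at s within {0..1})" if "s \<in> {0..1}" for s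
  proof -
    have "(z has_vector_derivative ((of_real (u1 s) - \<i> * of_real \<kappa> * of_real (u s)) * (\<i> * of_real \<kappa> * ee \<kappa> s)
        + (of_real (u2 s) - \<i> * of_real \<kappa> * of_real (u1 s)) * ee \<kappa> s)) (at s within {0..1})"
      unfolding z_def
      by (intro has_vector_derivative_mult has_vector_derivative_diff has_vector_derivative_of_real
          has_vector_derivative_mult_right ee_der d0 d1 that)
    moreover have "(of_real (u1 s) - \<i> * of_real \<kappa> * of_real (u s)) * (\<i> * of_real \<kappa> * ee \<kappa> s)
        + (of_real (u2 s) - \<i> * of_real \<kappa> * of_real (u1 s)) * ee \<kappa> s = of_real (f s) * ee \<kappa> s"
      unfolding f_def by (simp add: algebra_simps power2_eq_square)
    ultimately show ?thesis by simp
  qed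
  have zbound: "norm (z s - z t) \<le> A" if "s \<in> {0..1}" "t \<in> {0..1}" for s t
    unfolding A_def using zd that
    by (intro ftc_bound[where F'="\<lambda>s. of_real (f s) * ee \<kappa> s"])
      (auto intro!: continuous_intros cf simp: norm_mult norm_ee)
  have iu: "((\<lambda>s. of_real (u s) * ee \<kappa> s) has_integral b) {0..1}" unfolding b_def
    by (intro integrable_integral integrable_continuous_interval continuous_on_mult continuous_on_of_real cu ee_cont)
  have iu1: "((\<lambda>s. of_real (u1 s) * ee \<kappa> s) has_integral (- \<i> * of_real \<kappa> * b)) {0..1}"
  proof -
    have "integral {0..1} (\<lambda>s. of_real (u1 s) * ee \<kappa> s) = - \<i> * of_real \<kappa> * b"
      unfolding b_def using ibp[OF ek d0 cu1 p0] .
    moreover have "(\<lambda>s. of_real (u1 s) * ee \<kappa> s) integrable_on {0..1}"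
      by (intro integrable_continuous_interval continuous_on_mult continuous_on_of_real cu1 ee_cont)
    ultimately show ?thesis using integrable_integral by metis
  qed
  have zint: "(z has_integral (- 2 * \<i> * of_real \<kappa> * b)) {0..1}"
  proof -
    have "((\<lambda>s. of_real (u1 s) * ee \<kappa> s - (\<i> * of_real \<kappa>) * (of_real (u s) * ee \<kappa> s)) has_integral
        (- \<i> * of_real \<kappa> * b - (\<i> * of_real \<kappa>) * b)) {0..1}"
      by (intro has_integral_diff has_integral_mult_right iu iu1)
    moreover have "(\<lambda>s. of_real (u1 s) * ee \<kappa> s - (\<i> * of_real \<kappa>) * (of_real (u s) * ee \<kappa> s)) = z"
      unfolding z_def by (rule ext) (simp add: algebra_simps)
    moreover have "- \<i> * of_real \<kappa> * b - (\<i> * of_real \<kappa>) * b = - 2 * \<i> * of_real \<kappa> * b"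
      by (simp add: algebra_simps)
    ultimately show ?thesis by metis
  qed
  have zs: "norm (z s) \<le> A + 2 * \<bar>\<kappa>\<bar> * norm b" if s: "s \<in> {0..1}" for s
  proof -
    have "((\<lambda>t. z s - z t) has_integral (z s - (- 2 * \<i> * of_real \<kappa> * b))) {0..1}"
      using has_integral_diff[OF has_integral_const_real[of "z s" 0 1] zint] by simp
    then have e: "integral {0..1} (\<lambda>t. z s - z t) = z s + 2 * \<i> * of_real \<kappa> * b"
      and ii: "(\<lambda>t. z s - z t) integrable_on {0..1}" by (auto simp: has_integral_iff)
    have "norm (integral {0..1} (\<lambda>t. z s - z t)) \<le> integral {0..1::real} (\<lambda>t. A)"
      using zbound[OF s] by (intro Henstock_Kurzweil_Integration.integral_norm_bound_integral ii) auto
    then have "norm (z s + 2 * \<i> * of_real \<kappa> * b) \<le> A" using e by simp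
    moreover have "norm (2 * \<i> * of_real \<kappa> * b) = 2 * \<bar>\<kappa>\<bar> * norm b" by (simp add: norm_mult)
    moreover have "norm (z s) \<le> norm (z s + 2 * \<i> * of_real \<kappa> * b) + norm (2 * \<i> * of_real \<kappa> * b)"
      by (metis add_diff_cancel norm_triangle_ineq4)
    ultimately show ?thesis by linarith
  qed
  have AQ: "A\<^sup>2 \<le> Q" unfolding A_def Q_def by (rule sq_int_bound[OF cf])
  have A0: "0 \<le> A" unfolding A_def by (intro integral_nonneg integrable_continuous_interval continuous_intros cf) auto
  have us: "\<kappa>\<^sup>2 * (u s)\<^sup>2 \<le> 2 * Q + 8 * \<kappa>\<^sup>2 * (norm b)\<^sup>2" if s: "s \<in> {0..1}" for s
  proof -
    have "(norm (z s))\<^sup>2 = (u1 s)\<^sup>2 + \<kappa>\<^sup>2 * (u s)\<^sup>2"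
    proof -
      have "(norm (z s))\<^sup>2 = (cmod (of_real (u1 s) - \<i> * of_real \<kappa> * of_real (u s)))\<^sup>2"
        unfolding z_def by (simp add: norm_mult norm_ee)
      also have "\<dots> = (u1 s)\<^sup>2 + \<kappa>\<^sup>2 * (u s)\<^sup>2"
        unfolding cmod_power2 by (simp add: power2_eq_square)
      finally show ?thesis .
    qed
    then have "\<kappa>\<^sup>2 * (u s)\<^sup>2 \<le> (norm (z s))\<^sup>2" by simp
    also have "\<dots> \<le> (A + 2 * \<bar>\<kappa>\<bar> * norm b)\<^sup>2"
      using zs[OF s] by (intro power_mono) auto
    also have "\<dots> \<le> 2 * A\<^sup>2 + 8 * \<kappa>\<^sup>2 * (norm b)\<^sup>2"
    proof -
      have "0 \<le> (A - 2 * \<bar>\<kappa>\<bar> * norm b)\<^sup>2" by simp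
      then show ?thesis by (simp add: power2_eq_square algebra_simps)
    qed
    also have "\<dots> \<le> 2 * Q + 8 * \<kappa>\<^sup>2 * (norm b)\<^sup>2" using AQ by simp
    finally show ?thesis .
  qed
  have pt: "(u2 s)\<^sup>2 \<le> 2 * (f s)\<^sup>2 + 2 * \<kappa>\<^sup>2 * (2 * Q + 8 * \<kappa>\<^sup>2 * (norm b)\<^sup>2)" if s: "s \<in> {0..1}" for s
  proof -
    have "(u2 s)\<^sup>2 = (f s - \<kappa>\<^sup>2 * u s)\<^sup>2" unfolding f_def by simp
    also have "\<dots> \<le> 2 * (f s)\<^sup>2 + 2 * (\<kappa>\<^sup>2 * u s)\<^sup>2"
    proof -
      have "0 \<le> (f s + \<kappa>\<^sup>2 * u s)\<^sup>2" by simp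
      then show ?thesis by (simp add: power2_eq_square algebra_simps)
    qed
    also have "(\<kappa>\<^sup>2 * u s)\<^sup>2 = \<kappa>\<^sup>2 * (\<kappa>\<^sup>2 * (u s)\<^sup>2)" by (simp add: power2_eq_square)
    also have "2 * (f s)\<^sup>2 + 2 * (\<kappa>\<^sup>2 * (\<kappa>\<^sup>2 * (u s)\<^sup>2)) \<le> 2 * (f s)\<^sup>2 + 2 * (\<kappa>\<^sup>2 * (2 * Q + 8 * \<kappa>\<^sup>2 * (norm b)\<^sup>2))"
      using mult_left_mono[OF us[OF s], of "\<kappa>\<^sup>2"] by simp
    finally show ?thesis by simp
  qed
  have "integral {0..1} (\<lambda>s. (u2 s)\<^sup>2) \<le> integral {0..1} (\<lambda>s. 2 * (f s)\<^sup>2 + 2 * \<kappa>\<^sup>2 * (2 * Q + 8 * \<kappa>\<^sup>2 * (norm b)\<^sup>2))"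
    using pt by (intro Henstock_Kurzweil_Integration.integral_le integrable_continuous_interval continuous_intros c2 cf) auto
  also have "\<dots> = 2 * Q + 2 * \<kappa>\<^sup>2 * (2 * Q + 8 * \<kappa>\<^sup>2 * (norm b)\<^sup>2)"
  proof -
    have "((\<lambda>s. (f s)\<^sup>2) has_integral Q) {0..1}" unfolding Q_def
      by (intro integrable_integral integrable_continuous_interval continuous_intros cf)
    from has_integral_add[OF has_integral_mult_right[OF this, of 2]
        has_integral_const_real[of "2 * \<kappa>\<^sup>2 * (2 * Q + 8 * \<kappa>\<^sup>2 * (norm b)\<^sup>2)" 0 1]]
    show ?thesis by (simp add: has_integral_iff)
  qed
  also have "\<dots> = (2 + 4 * \<kappa>\<^sup>2) * Q + 16 * \<kappa>^4 * (norm b)\<^sup>2"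
    by (simp add: algebra_simps power2_eq_square power4_eq_xxxx)
  finally show ?thesis unfolding Q_def f_def b_def .
qed

context curve begin

lemma T'_eq: "T' t = \<i> * of_real (curvature g t) * T t"
proof -
  have r: "((\<lambda>t. Re (T t)) has_real_derivative Re (T' t)) (at t)"
    using has_field_derivative_Re[OF T_vd] .
  have i: "((\<lambda>t. Im (T t)) has_real_derivative Im (T' t)) (at t)"
    using has_field_derivative_Im[OF T_vd] .
  have "((\<lambda>t. Re (T t) * Re (T t) + Im (T t) * Im (T t)) has_real_derivative
     (Re (T' t) * Re (T t) + Re (T' t) * Re (T t) + (Im (T' t) * Im (T t) + Im (T' t) * Im (T t)))) (at t)"
    by (intro DERIV_add DERIV_mult r i)
  moreover have "(\<lambda>t. Re (T t) * Re (T t) + Im (T t) * Im (T t)) = (\<lambda>t. 1)"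
  proof
    fix t
    show "Re (T t) * Re (T t) + Im (T t) * Im (T t) = 1"
      using unit[of t] by (metis cmod_power2 power2_eq_square power_one)
  qed
  ultimately have "((\<lambda>t. 1) has_real_derivative
     (Re (T' t) * Re (T t) + Re (T' t) * Re (T t) + (Im (T' t) * Im (T t) + Im (T' t) * Im (T t)))) (at t)"
    by simp
  then have "Re (T' t) * Re (T t) + Re (T' t) * Re (T t) + (Im (T' t) * Im (T t) + Im (T' t) * Im (T t)) = 0"
    using DERIV_unique[OF _ DERIV_const] by blast
  then have o: "Re (T t) * Re (T' t) + Im (T t) * Im (T' t) = 0"
    by (simp add: algebra_simps)
  define a where "a = Re (T t)"
  define b where "b = Im (T t)"
  define c where "c = Re (T' t)"
  define d where "d = Im (T' t)"
  have n: "a * a + b * b = 1" unfolding a_def b_def using unit[of t]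
    by (metis cmod_power2 power2_eq_square power_one)
  have o': "a * c + b * d = 0" using o unfolding a_def b_def c_def d_def .
  have k: "curvature g t = a * d - b * c" unfolding curv_eq a_def b_def c_def d_def by simp
  have e1: "c = - ((a * d - b * c) * b)"
  proof -
    have "c = c * (a * a + b * b)" using n by simp
    also have "\<dots> = a * (a * c + b * d) - (a * d - b * c) * b" by algebra
    finally show ?thesis using o' by simp
  qed
  have e2: "d = (a * d - b * c) * a"
  proof -
    have "d = d * (a * a + b * b)" using n by simp
    also have "\<dots> = (a * d - b * c) * a + b * (a * c + b * d)" by algebra
    finally show ?thesis using o' by simp
  qed
  show ?thesis
    using e1 e2 unfolding k by (simp add: complex_eq_iff a_def b_def c_def d_def)
qed

end

locale curve_w = curve +
  fixes \<omega> :: int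
  assumes w0: "\<omega> \<noteq> 0" and tn: "turning_number g = of_int \<omega>"
begin

definition kap where "kap = 2 * pi * of_int \<omega>"
definition psi where "psi s = curvature g s - kap" for s
definition phi where "phi s = integral {0..s} psi" for s

lemma kap_nz: "kap \<noteq> 0" unfolding kap_def using w0 by simp

lemma ek: "ee kap 1 = 1"
proof -
  have "\<i> * complex_of_real (kap * 1) = (2 * of_int \<omega> * pi) * \<i>"
    by (simp add: kap_def algebra_simps)
  then show ?thesis unfolding ee_def using exp_integer_2pi[of "of_int \<omega>"] by (simp add: ac_simps)
qed

lemma int_k: "integral {0..1} (curvature g) = kap"
  using tn unfolding turning_number_def kap_def by (simp add: field_simps)

lemma curv_cont: "continuous_on S (curvature g)" using kds_cont[of S 0] kds0 by simp

lemma psi_cont: "continuous_on S psi" unfolding psi_def by (intro continuous_intros curv_cont)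

lemma int_psi: "(psi has_integral 0) {0..1}"
proof -
  have "(curvature g has_integral kap) {0..1}" using int_k
    by (metis integrable_integral integrable_continuous_interval curv_cont)
  from has_integral_diff[OF this has_integral_const_real[of kap 0 1]]
  show ?thesis unfolding psi_def[abs_def] by simp
qed

lemma phi_der: "s \<in> {0..1} \<Longrightarrow> (phi has_real_derivative psi s) (at s within {0..1})"
  unfolding phi_def[abs_def] by (intro integral_has_real_derivative psi_cont)

lemma phi0: "phi 0 = 0" unfolding phi_def by simp
lemma phi1: "phi 1 = 0" unfolding phi_def using int_psi by (simp add: has_integral_iff)

lemma phi_cont: "continuous_on {0..1} phi" using phi_der by (rule DERIV_continuous_on)

lemma psi_der: "(psi has_real_derivative kds g 1 s) (at s)"
  unfolding psi_def[abs_def] using kds_deriv[of 0 s] kds0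
  by (auto intro!: derivative_eq_intros)

lemma int_kds_Suc: "(kds g (Suc j) has_integral 0) {0..1}"
proof -
  have "(kds g (Suc j) has_integral (kds g j 1 - kds g j 0)) {0..1}"
    by (intro fundamental_theorem_of_calculus)
       (auto simp: has_real_derivative_iff_has_vector_derivative[symmetric]
             intro: has_field_derivative_at_within kds_deriv)
  then show ?thesis using kds_per[of j 0] by simp
qed

lemma kds_poinc: "integral {0..1} (\<lambda>t. (kds g (Suc j) t)\<^sup>2) \<le> integral {0..1} (\<lambda>t. (kds g (Suc (Suc j)) t)\<^sup>2)"
  using int_kds_Suc[of j]
  by (intro poincare) (auto intro: has_field_derivative_at_within kds_deriv kds_cont simp: has_integral_iff)

lemma kds_chain: "1 \<le> n \<Longrightarrow> integral {0..1} (\<lambda>t. (kds g 1 t)\<^sup>2) \<le> integral {0..1} (\<lambda>t. (kds g n t)\<^sup>2)"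
proof (induction n rule: dec_induct)
  case base then show ?case by simp
next
  case (step n)
  then obtain j where "n = Suc j" by (cases n) auto
  then show ?case using step kds_poinc[of j] by simp
qed

lemma psi_sq: "integral {0..1} (\<lambda>t. (psi t)\<^sup>2) \<le> integral {0..1} (\<lambda>t. (kds g 1 t)\<^sup>2)"
  using int_psi psi_der[THEN has_field_derivative_at_within]
  by (intro poincare) (auto intro: kds_cont simp: has_integral_iff)

lemma phi_pt: "s \<in> {0..1} \<Longrightarrow> (phi s)\<^sup>2 \<le> integral {0..1} (\<lambda>t. (psi t)\<^sup>2)"
  using phi0 by (intro point_bound[OF phi_der psi_cont, of 0]) auto


definition W where "W s = T s * exp ((- \<i>) * of_real (kap * s + phi s))" for s

lemma W_der: "s \<in> {0..1} \<Longrightarrow> (W has_vector_derivative 0) (at s within {0..1})"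
proof -
  assume s: "s \<in> {0..1}"
  have "((\<lambda>s. kap * s + phi s) has_real_derivative (kap * 1 + psi s)) (at s within {0..1})"
    by (intro DERIV_add DERIV_cmult DERIV_ident phi_der s)
  then have e: "((\<lambda>s. (- \<i>) * of_real (kap * s + phi s)) has_vector_derivative ((- \<i>) * of_real (kap + psi s))) (at s within {0..1})"
    by (intro has_vector_derivative_mult_right has_vector_derivative_of_real) simp
  have ex: "(exp has_field_derivative exp ((- \<i>) * of_real (kap * s + phi s)))
       (at ((\<lambda>s. (- \<i>) * of_real (kap * s + phi s)) s) within (\<lambda>s. (- \<i>) * of_real (kap * s + phi s)) ` {0..1})"
    by (rule has_field_derivative_at_within[OF DERIV_exp])
  have ee: "((\<lambda>s. exp ((- \<i>) * of_real (kap * s + phi s))) has_vector_derivative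
      ((- \<i>) * of_real (kap + psi s)) * exp ((- \<i>) * of_real (kap * s + phi s))) (at s within {0..1})"
    using field_vector_diff_chain_within[OF e ex] by (simp add: comp_def)
  have d: "(W has_vector_derivative (T s * (((- \<i>) * of_real (kap + psi s)) * exp ((- \<i>) * of_real (kap * s + phi s)))
     + T' s * exp ((- \<i>) * of_real (kap * s + phi s)))) (at s within {0..1})"
    unfolding W_def[abs_def] by (intro has_vector_derivative_mult ee has_vector_derivative_at_within[OF T_vd])
  have z: "T s * (((- \<i>) * of_real (kap + psi s)) * exp ((- \<i>) * of_real (kap * s + phi s)))
     + T' s * exp ((- \<i>) * of_real (kap * s + phi s)) = 0"
  proof -
    have k: "kap + psi s = curvature g s" by (simp add: psi_def)
    have gen: "a * ((- \<i>) * c * x) + \<i> * c * a * x = 0" for a c x :: complex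
      by (simp add: algebra_simps)
    show ?thesis unfolding T'_eq k by (rule gen)
  qed
  show ?thesis using d unfolding z .
qed

lemma T_repr: "s \<in> {0..1} \<Longrightarrow> T s = T 0 * (ee kap s * exp (\<i> * of_real (phi s)))"
proof -
  assume s: "s \<in> {0..1}"
  obtain c where c: "\<And>x. x \<in> {0..1} \<Longrightarrow> W x = c"
    using has_vector_derivative_zero_constant[of "{0..1}" W] W_der by auto
  have "W s = W 0" using c s by simp
  also have "W 0 = T 0" unfolding W_def phi0 by simp
  finally have w: "T s * exp ((- \<i>) * of_real (kap * s + phi s)) = T 0" unfolding W_def .
  have "exp ((- \<i>) * of_real (kap * s + phi s)) * exp (\<i> * of_real (kap * s + phi s)) = 1"
    by (simp add: exp_add[symmetric])
  then have "T s = T s * (exp ((- \<i>) * of_real (kap * s + phi s)) * exp (\<i> * of_real (kap * s + phi s)))"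
    by simp
  also have "\<dots> = T 0 * exp (\<i> * of_real (kap * s + phi s))"
    using w by (simp add: mult.assoc[symmetric])
  also have "exp (\<i> * of_real (kap * s + phi s)) = ee kap s * exp (\<i> * of_real (phi s))"
    unfolding ee_def by (simp add: exp_add[symmetric] algebra_simps)
  finally show ?thesis .
qed

lemma X_cont: "continuous_on {0..1} (\<lambda>s. ee kap s * exp (\<i> * of_real (phi s)))"
  by (intro continuous_intros ee_cont phi_cont)

lemma J0: "((\<lambda>s. ee kap s * exp (\<i> * of_real (phi s))) has_integral 0) {0..1}"
proof -
  have "(T has_integral (g 1 - g 0)) {0..1}"
    by (intro fundamental_theorem_of_calculus) (auto intro: has_vector_derivative_at_within g_vd)
  then have t0: "(T has_integral 0) {0..1}" using per[of 0] by simp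
  have a: "((\<lambda>s. T 0 * (ee kap s * exp (\<i> * of_real (phi s)))) has_integral 0) {0..1}"
    using has_integral_eq[where f=T, OF T_repr t0] .
  define J where "J = integral {0..1} (\<lambda>s. ee kap s * exp (\<i> * of_real (phi s)))"
  have j: "((\<lambda>s. ee kap s * exp (\<i> * of_real (phi s))) has_integral J) {0..1}"
    unfolding J_def by (intro integrable_integral integrable_continuous_interval X_cont)
  have "T 0 * J = 0" using has_integral_unique[OF has_integral_mult_right[OF j, of "T 0"] a] .
  moreover have "T 0 \<noteq> 0" using unit[of 0] by auto
  ultimately have "J = 0" by simp
  then show ?thesis using j by simp
qed

lemma int_ee: "(ee kap has_integral 0) {0..1}"
proof -
  have "integral {0..1} (\<lambda>s. of_real 0 * ee kap s) = - \<i> * of_real kap * integral {0..1} (\<lambda>s. of_real 1 * ee kap s)"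
    by (rule ibp[OF ek, of "\<lambda>s. 1"]) (auto intro: DERIV_const)
  then have "integral {0..1} (ee kap) = 0" using kap_nz by simp
  moreover have "ee kap integrable_on {0..1}" by (intro integrable_continuous_interval ee_cont)
  ultimately show ?thesis using integrable_integral by metis
qed

lemma bound_phi: "norm (integral {0..1} (\<lambda>s. of_real (phi s) * ee kap s)) \<le> integral {0..1} (\<lambda>t. (psi t)\<^sup>2) / 2"
proof -
  define P where "P = integral {0..1} (\<lambda>s. of_real (phi s) * ee kap s)"
  have iP: "((\<lambda>s. of_real (phi s) * ee kap s) has_integral P) {0..1}" unfolding P_def
    by (intro integrable_integral integrable_continuous_interval continuous_on_mult continuous_on_of_real phi_cont ee_cont)
  have "((\<lambda>s. ee kap s * exp (\<i> * of_real (phi s)) - ee kap s - \<i> * (of_real (phi s) * ee kap s)) has_integral (0 - 0 - \<i> * P)) {0..1}"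
    by (intro has_integral_diff has_integral_mult_right J0 int_ee iP)
  then have ii: "((\<lambda>s. ee kap s * exp (\<i> * of_real (phi s)) - ee kap s - \<i> * (of_real (phi s) * ee kap s)) has_integral (- \<i> * P)) {0..1}"
    by simp
  have "norm (integral {0..1} (\<lambda>s. ee kap s * exp (\<i> * of_real (phi s)) - ee kap s - \<i> * (of_real (phi s) * ee kap s)))
     \<le> integral {0..1} (\<lambda>s. (phi s)\<^sup>2 / 2)"
  proof (intro Henstock_Kurzweil_Integration.integral_norm_bound_integral)
    show "(\<lambda>s. ee kap s * exp (\<i> * of_real (phi s)) - ee kap s - \<i> * (of_real (phi s) * ee kap s)) integrable_on {0..1}"
      using ii by blast
    show "(\<lambda>s. (phi s)\<^sup>2 / 2) integrable_on {0..1}"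
      by (intro integrable_continuous_interval continuous_intros phi_cont) auto
    fix s
    have "ee kap s * exp (\<i> * of_real (phi s)) - ee kap s - \<i> * (of_real (phi s) * ee kap s)
       = ee kap s * (iexp (phi s) - (1 + \<i> * of_real (phi s)))" by (simp add: algebra_simps)
    then have "norm (ee kap s * exp (\<i> * of_real (phi s)) - ee kap s - \<i> * (of_real (phi s) * ee kap s))
       = norm (iexp (phi s) - (1 + \<i> * of_real (phi s)))" by (simp add: norm_mult norm_ee)
    also have "\<dots> \<le> (phi s)\<^sup>2 / 2"
      using iexp_approx1[of "phi s" 1] by (simp add: numeral_2_eq_2)
    finally show "norm (ee kap s * exp (\<i> * of_real (phi s)) - ee kap s - \<i> * (of_real (phi s) * ee kap s)) \<le> (phi s)\<^sup>2 / 2" .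
  qed
  then have "norm P \<le> integral {0..1} (\<lambda>s. (phi s)\<^sup>2 / 2)"
    using ii by (simp add: has_integral_iff norm_mult)
  also have "\<dots> \<le> integral {0..1::real} (\<lambda>s. integral {0..1} (\<lambda>t. (psi t)\<^sup>2) / 2)"
    using phi_pt by (intro Henstock_Kurzweil_Integration.integral_le integrable_continuous_interval continuous_intros phi_cont)
      (auto simp: divide_right_mono)
  finally show ?thesis unfolding P_def by simp
qed


definition N where "N j = norm (integral {0..1} (\<lambda>s. of_real (kds g j s) * ee kap s))" for j

lemma N0: "N 0 \<le> \<bar>kap\<bar> * (integral {0..1} (\<lambda>t. (psi t)\<^sup>2) / 2)"
proof -
  have i1: "integral {0..1} (\<lambda>s. of_real (psi s) * ee kap s) = - \<i> * of_real kap * integral {0..1} (\<lambda>s. of_real (phi s) * ee kap s)"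
    using phi0 phi1 by (intro ibp[OF ek phi_der psi_cont]) auto
  have ip: "((\<lambda>s. of_real (psi s) * ee kap s) has_integral integral {0..1} (\<lambda>s. of_real (psi s) * ee kap s)) {0..1}"
    by (intro integrable_integral integrable_continuous_interval continuous_on_mult continuous_on_of_real psi_cont ee_cont)
  have "((\<lambda>s. of_real (psi s) * ee kap s + of_real kap * ee kap s) has_integral
      (integral {0..1} (\<lambda>s. of_real (psi s) * ee kap s) + of_real kap * 0)) {0..1}"
    by (intro has_integral_add has_integral_mult_right ip int_ee)
  moreover have "(\<lambda>s. of_real (psi s) * ee kap s + of_real kap * ee kap s) = (\<lambda>s. of_real (kds g 0 s) * ee kap s)"
    by (rule ext) (simp add: psi_def kds0 algebra_simps)
  ultimately have "integral {0..1} (\<lambda>s. of_real (kds g 0 s) * ee kap s) = integral {0..1} (\<lambda>s. of_real (psi s) * ee kap s)"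
    by (simp add: has_integral_iff)
  then have "N 0 = \<bar>kap\<bar> * norm (integral {0..1} (\<lambda>s. of_real (phi s) * ee kap s))"
    unfolding N_def i1 by (simp add: norm_mult)
  also have "\<dots> \<le> \<bar>kap\<bar> * (integral {0..1} (\<lambda>t. (psi t)\<^sup>2) / 2)"
    using bound_phi by (intro mult_left_mono) auto
  finally show ?thesis .
qed

lemma N_Suc: "N (Suc j) = \<bar>kap\<bar> * N j"
proof -
  have "integral {0..1} (\<lambda>s. of_real (kds g (Suc j) s) * ee kap s) = - \<i> * of_real kap * integral {0..1} (\<lambda>s. of_real (kds g j s) * ee kap s)"
    using kds_per[of j 0] kds_deriv[of j, THEN has_field_derivative_at_within]
    by (intro ibp[OF ek]) (auto intro: kds_cont)
  then show ?thesis unfolding N_def by (simp add: norm_mult)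
qed

lemma N_pow: "N j = \<bar>kap\<bar> ^ j * N 0"
  by (induction j) (auto simp: N_Suc)

lemma main_ineq:
  assumes m: "1 \<le> m"
  shows "integral {0..1} (\<lambda>s. (kds g (2*m+2) s)\<^sup>2) \<le> (2 + 4*kap\<^sup>2) *
      integral {0..1} (\<lambda>s. ((-1) ^ (m + 1) * (kds g (2*m+2) s + kap\<^sup>2 * kds g (2*m) s))\<^sup>2)
      + 16 * kap ^ (4*m+6) * (energy m g)\<^sup>2"
proof -
  have lp: "integral {0..1} (\<lambda>s. (kds g (Suc (Suc (2*m))) s)\<^sup>2) \<le> (2 + 4 * kap\<^sup>2) *
     integral {0..1} (\<lambda>s. (kds g (Suc (Suc (2*m))) s + kap\<^sup>2 * kds g (2*m) s)\<^sup>2)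
     + 16 * kap^4 * (N (2*m))\<^sup>2"
  proof -
    have d0: "(kds g (2*m) has_real_derivative kds g (Suc (2*m)) s) (at s within {0..1})" for s
      by (rule has_field_derivative_at_within[OF kds_deriv])
    have d1: "(kds g (Suc (2*m)) has_real_derivative kds g (Suc (Suc (2*m))) s) (at s within {0..1})" for s
      by (rule has_field_derivative_at_within[OF kds_deriv])
    have p0: "kds g (2*m) 0 = kds g (2*m) 1" using kds_per[of "2*m" 0] by simp
    have p1: "kds g (Suc (2*m)) 0 = kds g (Suc (2*m)) 1" using kds_per[of "Suc (2*m)" 0] by simp
    show ?thesis unfolding N_def by (rule linear_part[OF d0 d1 kds_cont p0 p1 ek kap_nz])
  qed
  have sq: "((-1::real) ^ (m + 1) * x)\<^sup>2 = x\<^sup>2" for x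
    by (cases "even m") (simp_all add: power_mult_distrib)
  have E: "integral {0..1} (\<lambda>t. (psi t)\<^sup>2) \<le> 2 * energy m g"
    using order_trans[OF psi_sq kds_chain[OF m]] unfolding energy_def by linarith
  have N0': "N 0 \<le> \<bar>kap\<bar> * energy m g"
  proof -
    have "integral {0..1} (\<lambda>t. (psi t)\<^sup>2) / 2 \<le> energy m g" using E by linarith
    then have "\<bar>kap\<bar> * (integral {0..1} (\<lambda>t. (psi t)\<^sup>2) / 2) \<le> \<bar>kap\<bar> * energy m g"
      using mult_left_mono[OF _ abs_ge_zero] by blast
    then show ?thesis using N0 by linarith
  qed
  have Nb: "N (2*m) \<le> \<bar>kap\<bar> ^ (2*m+1) * energy m g"
    using a3[OF N0', of "2*m"] N_pow[of "2*m"] by simp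
  have "(N (2*m))\<^sup>2 \<le> (\<bar>kap\<bar> ^ (2*m+1) * energy m g)\<^sup>2"
    using Nb by (intro power_mono) (auto simp: N_def)
  also have "\<dots> = kap ^ (4*m+2) * (energy m g)\<^sup>2"
    by (rule a1)
  finally have Nsq: "(N (2*m))\<^sup>2 \<le> kap ^ (4*m+2) * (energy m g)\<^sup>2" .
  have "16 * kap^4 * (N (2*m))\<^sup>2 \<le> 16 * kap^4 * (kap ^ (4*m+2) * (energy m g)\<^sup>2)"
    using mult_left_mono[OF Nsq, of "16 * kap^4"] by simp
  also have "\<dots> = 16 * kap ^ (4*m+6) * (energy m g)\<^sup>2"
    by (rule a2)
  finally have f: "16 * kap^4 * (N (2*m))\<^sup>2 \<le> 16 * kap ^ (4*m+6) * (energy m g)\<^sup>2" .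
  have e2: "Suc (Suc (2*m)) = 2*m+2" by simp
  show ?thesis unfolding sq using lp f unfolding e2 by linarith
qed

end


theorem mainTheorem7:
  fixes m :: nat and \<omega> :: int
  assumes "m \<ge> 1" and "\<omega> \<noteq> 0"
  shows "\<exists>c > 0. \<exists>C > 0. \<forall>g. closed_unit_length_curve g \<and> turning_number g = real_of_int \<omega> \<longrightarrow>
    (let \<kappa> = 2 * pi * real_of_int \<omega>;
         F0 = (\<lambda>s. (-1) ^ (m + 1) * (kds g (2*m+2) s + \<kappa>^2 * kds g (2*m) s));
         P = integral {0..1} (\<lambda>s. (kds g (2*m+2) s)^2)
     in integral {0..1} (\<lambda>s. (F0 s)^2) \<ge> c * P - C * (energy m g)^2)"
proof -
  define K where "K = 2 * pi * real_of_int \<omega>"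
  have Knz: "K \<noteq> 0" unfolding K_def using assms(2) by simp
  define D where "D = 2 + 4 * K\<^sup>2"
  have D0: "0 < D" unfolding D_def by (simp add: add_pos_nonneg)
  define c where "c = 1 / D"
  define C where "C = 16 * K ^ (4*m+6) / D"
  have c0: "0 < c" unfolding c_def using D0 by simp
  have "0 < K ^ (4*m+6)"
  proof -
    have "even (4*m+6)" by simp
    then show ?thesis using Knz by (simp add: zero_less_power_eq)
  qed
  then have C0: "0 < C" unfolding C_def using D0 by simp
  have key: "\<forall>g. closed_unit_length_curve g \<and> turning_number g = real_of_int \<omega> \<longrightarrow>
     c * integral {0..1} (\<lambda>s. (kds g (2*m+2) s)^2) - C * (energy m g)^2
     \<le> integral {0..1} (\<lambda>s. ((-1) ^ (m + 1) * (kds g (2*m+2) s + (2 * pi * real_of_int \<omega>)^2 * kds g (2*m) s))^2)"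
  proof (intro allI impI)
    fix g assume g: "closed_unit_length_curve g \<and> turning_number g = real_of_int \<omega>"
    interpret curve_w g \<omega>
      using g assms(2) by unfold_locales auto
    have kK: "kap = K" unfolding kap_def K_def ..
    define P where "P = integral {0..1} (\<lambda>s. (kds g (2*m+2) s)\<^sup>2)"
    define Q where "Q = integral {0..1} (\<lambda>s. ((-1) ^ (m + 1) * (kds g (2*m+2) s + K\<^sup>2 * kds g (2*m) s))\<^sup>2)"
    define E where "E = energy m g"
    have mi: "P \<le> D * Q + 16 * K ^ (4*m+6) * E\<^sup>2"
      using main_ineq[OF assms(1)] unfolding P_def Q_def E_def D_def kK .
    have "c * P \<le> c * (D * Q + 16 * K ^ (4*m+6) * E\<^sup>2)"
      using mult_left_mono[OF mi] c0 by simp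
    also have "\<dots> = Q + C * E\<^sup>2"
      unfolding c_def C_def using D0 by (simp add: field_simps)
    finally have "c * P - C * E\<^sup>2 \<le> Q" by simp
    then show "c * integral {0..1} (\<lambda>s. (kds g (2*m+2) s)^2) - C * (energy m g)^2
     \<le> integral {0..1} (\<lambda>s. ((-1) ^ (m + 1) * (kds g (2*m+2) s + (2 * pi * real_of_int \<omega>)^2 * kds g (2*m) s))^2)"
      unfolding P_def Q_def E_def K_def .
  qed
  show ?thesis unfolding Let_def using c0 C0 key by blast
qed


end
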